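(* Consider the regular partially labeled $k$-label broadcasting tree $\text{Tree}_k(\theta,d,\delta)$ (see context), and for $i\in[k]$ let $\mu^{(i)}_{\ell_{T_{\leq t}(\rho)}}$ be the distribution of the revealed labels $\ell_{T_{\leq t}(\rho)}$ conditionally on $\ell(\rho)=i$. Assume $\delta d>1$, $(1-\delta)\theta^2d<\frac14$, and $$2\delta d\log\Big(1+\theta^2\Big(\frac{1}{\theta+\frac{1-\theta}{k}}+\frac{1}{\frac{1-\theta}{k}}\Big)\Big)<[1-4(1-\delta)\theta^2d]^2.$$ Then for any $t>0$, $$\max_{i,j\in[k]}\log\Big(1+d_{\chi^2}\big(\mu^{(i)}_{\ell_{T_{\leq t}(\rho)}},\mu^{(j)}_{\ell_{T_{\leq t}(\rho)}}\big)\Big)\leq\frac{2\delta d\log\Big(1+\theta^2\Big(\frac{1}{\theta+\frac{1-\theta}{k}}+\frac{1}{\frac{1-\theta}{k}}\Big)\Big)}{1-4(1-\delta)\theta^2d}\leq k\cdot\frac{2\delta\theta^2d}{1-4(1-\delta)\theta^2d}\Big(\frac{1}{1-\theta}+\frac{1}{k\theta+1-\theta}\Big).$$ Furthermore, $$\inf_\Phi\sup_{\ell(\rho)\in[k]}\mathbb{P}\big(\Phi(\ell_{T_{\leq t}(\rho)})\neq\ell(\rho)\big)\geq\frac12\Big(1-\frac{2\delta\theta^2d}{1-4(1-\delta)\theta^2d}\Big(\frac{1}{1-\theta}+\frac{1}{k\theta+1-\theta}\Big)-\frac1k\Big),$$ where the infimum is over all estimators $\Phi$ mapping the revealed labels to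 $[k]$.
   Context: $\text{Tree}_k(\theta,d,\delta)$ (regular version): every vertex has $d$ children, exactly $\delta d$ with revealed labels and $(1-\delta)d$ unlabeled; labels in $[k]=\{1,\dots,k\}$; the root label is unrevealed; each child independently copies its parent's label with probability $\theta+\frac{1-\theta}{k}$ and takes each of the other $k-1$ labels with probability $\frac{1-\theta}{k}$, $0<\theta<1$. $\ell_{T_{\leq t}(\rho)}$ is the collection of revealed labels at depth $\leq t$. $d_{\chi^2}(\mu,\nu)=\int\frac{\mu^2}{\nu}-1$ is the $\chi^2$ divergence. *)

theory Defs
  imports "HOL-Analysis.Analysis"
begin

text \<open>Vertices of the d-ary tree truncated at depth t: words over {0..<d} of length at most t.
  The root is the empty word; the parent of a non-root vertex v is butlast v.\<close>
definition tree_verts :: "nat \<Rightarrow> nat \<Rightarrow> nat list set" where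
  "tree_verts d t = {vs. length vs \<le> t \<and> set vs \<subseteq> {..<d}}"

text \<open>Revealed vertices: among the d children of every vertex, the first r
  (r = delta d) have revealed labels; the root is unrevealed.\<close>
definition revealed_verts :: "nat \<Rightarrow> nat \<Rightarrow> nat \<Rightarrow> nat list set" where
  "revealed_verts r d t = {vs \<in> tree_verts d t. vs \<noteq> [] \<and> last vs < r}"

definition trans_prob :: "nat \<Rightarrow> real \<Rightarrow> nat \<Rightarrow> nat \<Rightarrow> real" where
  "trans_prob k \<theta> a b = (if a = b then \<theta> + (1 - \<theta>) / real k else (1 - \<theta>) / real k)"

definition full_configs :: "nat \<Rightarrow> nat \<Rightarrow> nat \<Rightarrow> (nat list \<Rightarrow> nat) set" where
  "full_configs k d t = PiE (tree_verts d t) (\<lambda>_. {1..k})"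

definition rev_configs :: "nat \<Rightarrow> nat \<Rightarrow> nat \<Rightarrow> nat \<Rightarrow> (nat list \<Rightarrow> nat) set" where
  "rev_configs k r d t = PiE (revealed_verts r d t) (\<lambda>_. {1..k})"

definition mu :: "nat \<Rightarrow> real \<Rightarrow> nat \<Rightarrow> nat \<Rightarrow> nat \<Rightarrow> nat \<Rightarrow> (nat list \<Rightarrow> nat) \<Rightarrow> real" where
  "mu k \<theta> r d t i x =
     (\<Sum>\<sigma> \<in> {\<sigma> \<in> full_configs k d t. \<sigma> [] = i \<and> restrict \<sigma> (revealed_verts r d t) = x}.
        \<Prod>v \<in> tree_verts d t - {[]}. trans_prob k \<theta> (\<sigma> (butlast v)) (\<sigma> v))"

definition chi2 :: "'a set \<Rightarrow> ('a \<Rightarrow> real) \<Rightarrow> ('a \<Rightarrow> real) \<Rightarrow> real" where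
  "chi2 S \<mu> \<nu> = (\<Sum>x\<in>S. (\<mu> x)^2 / \<nu> x) - 1"

definition err_prob :: "nat \<Rightarrow> real \<Rightarrow> nat \<Rightarrow> nat \<Rightarrow> nat \<Rightarrow> ((nat list \<Rightarrow> nat) \<Rightarrow> nat) \<Rightarrow> nat \<Rightarrow> real" where
  "err_prob k \<theta> r d t \<Phi> i = (\<Sum>x \<in> rev_configs k r d t. if \<Phi> x \<noteq> i then mu k \<theta> r d t i x else 0)"

end

theory Submission
  imports Defs
begin


lemma sum_PiE_insert:
  assumes "a \<notin> S"
  shows "(\<Sum>\<sigma>\<in>PiE (insert a S) (\<lambda>_. A). g \<sigma>) = (\<Sum>b\<in>A. \<Sum>\<tau>\<in>PiE S (\<lambda>_. A). g (\<tau>(a:=b)))"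
proof -
  have inj: "inj_on (\<lambda>(y, g). g(a := y)) (A \<times> PiE S (\<lambda>_. A))"
  proof (rule inj_onI, clarify)
    fix y1 g1 y2 g2 assume h: "y1 \<in> A" "g1 \<in> PiE S (\<lambda>_. A)" "y2 \<in> A" "g2 \<in> PiE S (\<lambda>_. A)"
      "g1(a := y1) = g2(a := y2)"
    from h(5) have "y1 = y2" by (metis fun_upd_same)
    moreover have "g1 = g2"
    proof
      fix v show "g1 v = g2 v"
      proof (cases "v = a")
        case True thus ?thesis using h assms by (auto simp: PiE_def extensional_def)
      next
        case False thus ?thesis using h(5) by (metis fun_upd_other)
      qed
    qed
    ultimately show "y1 = y2 \<and> g1 = g2" by simp
  qed
  have "(\<Sum>\<sigma>\<in>PiE (insert a S) (\<lambda>_. A). g \<sigma>) = (\<Sum>p\<in>A \<times> PiE S (\<lambda>_. A). g ((\<lambda>(y, g). g(a := y)) p))"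
    unfolding PiE_insert_eq by (rule sum.reindex[OF inj, unfolded comp_def])
  also have "\<dots> = (\<Sum>b\<in>A. \<Sum>\<tau>\<in>PiE S (\<lambda>_. A). g (\<tau>(a:=b)))"
    by (simp add: sum.cartesian_product case_prod_unfold)
  finally show ?thesis .
qed

lemma sum_PiE_split:
  fixes f :: "nat \<Rightarrow> (nat list \<Rightarrow> 'b) \<Rightarrow> 'c::comm_semiring_1" and A :: "'b set"
  assumes I: "finite I" and T: "\<And>c. c \<in> I \<Longrightarrow> finite (T c)" and A: "finite A"
  shows "(\<Sum>\<tau>\<in>PiE (\<Union>c\<in>I. (#) c ` T c) (\<lambda>_. A). \<Prod>c\<in>I. f c (\<lambda>w\<in>T c. \<tau> (c#w)))
       = (\<Prod>c\<in>I. \<Sum>y\<in>PiE (T c) (\<lambda>_. A). f c y)"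
proof -
  define U where "U = (\<Union>c\<in>I. (#) c ` T c)"
 define spl :: "(nat list \<Rightarrow> 'b) \<Rightarrow> nat \<Rightarrow> nat list \<Rightarrow> 'b" where "spl = (\<lambda>\<tau>. \<lambda>c\<in>I. \<lambda>w\<in>T c. \<tau> (c#w))"
  define join :: "(nat \<Rightarrow> nat list \<Rightarrow> 'b) \<Rightarrow> nat list \<Rightarrow> 'b" where "join = (\<lambda>Y v. if v \<in> U then Y (hd v) (tl v) else undefined)"
  have bij: "bij_betw spl (PiE U (\<lambda>_. A)) (PiE I (\<lambda>c. PiE (T c) (\<lambda>_. A)))"
  proof (rule bij_betw_byWitness[where f'=join])
    show "\<forall>\<tau>\<in>PiE U (\<lambda>_. A). join (spl \<tau>) = \<tau>"
    proof
      fix \<tau> assume t: "\<tau> \<in> PiE U (\<lambda>_. A)"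
      show "join (spl \<tau>) = \<tau>"
      proof
        fix v show "join (spl \<tau>) v = \<tau> v"
        proof (cases "v \<in> U")
          case True
          then obtain c w where "c \<in> I" "w \<in> T c" "v = c # w" unfolding U_def by auto
          thus ?thesis using True by (simp add: join_def spl_def)
        next
          case False thus ?thesis using t by (auto simp: join_def PiE_def extensional_def)
        qed
      qed
    qed
    show "\<forall>Y\<in>PiE I (\<lambda>c. PiE (T c) (\<lambda>_. A)). spl (join Y) = Y"
    proof
      fix Y assume Y: "Y \<in> PiE I (\<lambda>c. PiE (T c) (\<lambda>_. A))"
      show "spl (join Y) = Y"
      proof
        fix c show "spl (join Y) c = Y c"
        proof (cases "c \<in> I")
          case True
          have "(\<lambda>w\<in>T c. join Y (c # w)) = Y c"
          proof
            fix w
            have Yc: "Y c \<in> PiE (T c) (\<lambda>_. A)" using Y True by auto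
            show "(\<lambda>w\<in>T c. join Y (c # w)) w = Y c w"
            proof (cases "w \<in> T c")
              case True thus ?thesis using \<open>c \<in> I\<close> by (auto simp: join_def U_def)
            next
              case False thus ?thesis using Yc by (auto simp: PiE_def extensional_def)
            qed
          qed
          thus ?thesis using True by (simp add: spl_def)
        next
          case False thus ?thesis using Y by (auto simp: spl_def PiE_def extensional_def)
        qed
      qed
    qed
    show "spl ` PiE U (\<lambda>_. A) \<subseteq> PiE I (\<lambda>c. PiE (T c) (\<lambda>_. A))"
      by (auto simp: spl_def U_def PiE_def Pi_def) blast
    show "join ` PiE I (\<lambda>c. PiE (T c) (\<lambda>_. A)) \<subseteq> PiE U (\<lambda>_. A)"
      by (auto simp: join_def U_def PiE_def Pi_def extensional_def) blast
  qed
  have "(\<Prod>c\<in>I. \<Sum>y\<in>PiE (T c) (\<lambda>_. A). f c y) = (\<Sum>Y\<in>PiE I (\<lambda>c. PiE (T c) (\<lambda>_. A)). \<Prod>c\<in>I. f c (Y c))"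
    using I T A by (intro prod_sum_PiE) (auto intro: finite_PiE)
  also have "\<dots> = (\<Sum>\<tau>\<in>PiE U (\<lambda>_. A). \<Prod>c\<in>I. f c (spl \<tau> c))"
    by (rule sum.reindex_bij_betw[OF bij, symmetric])
  also have "\<dots> = (\<Sum>\<tau>\<in>PiE U (\<lambda>_. A). \<Prod>c\<in>I. f c (\<lambda>w\<in>T c. \<tau> (c#w)))"
    by (intro sum.cong prod.cong) (auto simp: spl_def)
  finally show ?thesis unfolding U_def by simp
qed



lemma tree_verts_0: "tree_verts d 0 = {[]}"
  by (auto simp: tree_verts_def)

lemma tree_verts_Suc: "tree_verts d (Suc t) = insert [] (\<Union>c\<in>{..<d}. (#) c ` tree_verts d t)"
proof (rule set_eqI)
  fix v show "v \<in> tree_verts d (Suc t) \<longleftrightarrow> v \<in> insert [] (\<Union>c\<in>{..<d}. (#) c ` tree_verts d t)"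
    by (cases v) (auto simp: tree_verts_def)
qed

lemma nil_notin_U: "[] \<notin> (\<Union>c\<in>{..<d}. (#) c ` A)"
  by auto

lemma finite_tree_verts: "finite (tree_verts d t)"
proof -
  have "tree_verts d t \<subseteq> {xs. set xs \<subseteq> {..<d} \<and> length xs \<le> t}"
    by (auto simp: tree_verts_def)
  thus ?thesis using finite_lists_length_le[of "{..<d}" t] by (auto intro: finite_subset)
qed

lemma nil_in_tree_verts: "[] \<in> tree_verts d t"
  by (auto simp: tree_verts_def)

lemma butlast_in_tree_verts: "w \<in> tree_verts d t \<Longrightarrow> butlast w \<in> tree_verts d t"
  by (auto simp: tree_verts_def dest: in_set_butlastD)

lemma revealed_verts_0: "revealed_verts r d 0 = {}"
  by (auto simp: revealed_verts_def tree_verts_def)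

lemma nil_notin_revealed: "[] \<notin> revealed_verts r d t"
  by (auto simp: revealed_verts_def)

lemma revealed_sub: "revealed_verts r d t \<subseteq> tree_verts d t"
  by (auto simp: revealed_verts_def)

lemma finite_revealed: "finite (revealed_verts r d t)"
  using finite_tree_verts revealed_sub by (rule finite_subset[rotated])

definition Sc :: "nat \<Rightarrow> nat \<Rightarrow> nat \<Rightarrow> nat \<Rightarrow> nat list set" where
  "Sc r d t c = (if c < r then insert [] (revealed_verts r d t) else revealed_verts r d t)"

lemma Sc_sub: "Sc r d t c \<subseteq> tree_verts d t"
  using revealed_sub nil_in_tree_verts by (auto simp: Sc_def)

lemma finite_Sc: "finite (Sc r d t c)"
  by (simp add: Sc_def finite_revealed)

lemma cons_in_revealed_Suc: "c # w \<in> revealed_verts r d (Suc t) \<longleftrightarrow> c < d \<and> w \<in> Sc r d t c"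
  by (cases w) (auto simp: revealed_verts_def tree_verts_def Sc_def)

lemma revealed_verts_Suc: "revealed_verts r d (Suc t) = (\<Union>c\<in>{..<d}. (#) c ` Sc r d t c)"
proof (rule set_eqI)
  fix v show "v \<in> revealed_verts r d (Suc t) \<longleftrightarrow> v \<in> (\<Union>c\<in>{..<d}. (#) c ` Sc r d t c)"
  proof (cases v)
    case Nil thus ?thesis by (auto simp add: nil_notin_revealed)
  next
    case (Cons c w) thus ?thesis using cons_in_revealed_Suc[of c w r d t] by auto
  qed
qed



definition Wt :: "nat \<Rightarrow> real \<Rightarrow> nat \<Rightarrow> nat \<Rightarrow> (nat list \<Rightarrow> nat) \<Rightarrow> real" where
  "Wt k \<theta> d t y = (\<Prod>v \<in> tree_verts d t - {[]}. trans_prob k \<theta> (y (butlast v)) (y v))"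

definition Fc :: "nat \<Rightarrow> real \<Rightarrow> nat \<Rightarrow> nat \<Rightarrow> nat \<Rightarrow> nat \<Rightarrow> nat \<Rightarrow> (nat list \<Rightarrow> nat) \<Rightarrow> real" where
  "Fc k \<theta> r d t c i z = (if c < r then trans_prob k \<theta> i (z []) * mu k \<theta> r d t (z []) (restrict z (revealed_verts r d t))
      else (\<Sum>b\<in>{1..k}. trans_prob k \<theta> i b * mu k \<theta> r d t b z))"

lemma mu_alt: "mu k \<theta> r d t b z = (\<Sum>y\<in>PiE (tree_verts d t) (\<lambda>_. {1..k}).
    if y [] = b \<and> restrict y (revealed_verts r d t) = z then Wt k \<theta> d t y else 0)"
  unfolding mu_def full_configs_def Wt_def
  by (rule sum.inter_filter) (auto intro: finite_PiE finite_tree_verts)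

lemma Wt_Suc:
  fixes \<tau> :: "nat list \<Rightarrow> nat"
  shows "Wt k \<theta> d (Suc t) (\<tau>([] := i)) = (\<Prod>c\<in>{..<d}. trans_prob k \<theta> i (\<tau> [c]) * Wt k \<theta> d t (\<lambda>w\<in>tree_verts d t. \<tau> (c#w)))"
proof -
  let ?V = "tree_verts d t"
  let ?g = "\<lambda>v. trans_prob k \<theta> ((\<tau>([] := i)) (butlast v)) ((\<tau>([] := i)) v)"
  have U: "tree_verts d (Suc t) - {[]} = (\<Union>c\<in>{..<d}. (#) c ` ?V)"
    unfolding tree_verts_Suc by auto
  have "Wt k \<theta> d (Suc t) (\<tau>([] := i)) = (\<Prod>c\<in>{..<d}. prod ?g ((#) c ` ?V))"
    unfolding Wt_def U
    by (rule prod.UNION_disjoint) (auto simp: finite_tree_verts)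
  also have "\<dots> = (\<Prod>c\<in>{..<d}. \<Prod>w\<in>?V. ?g (c # w))"
    by (rule prod.cong[OF refl], subst prod.reindex) (auto simp: inj_on_def simp del: fun_upd_apply)
  also have "\<dots> = (\<Prod>c\<in>{..<d}. trans_prob k \<theta> i (\<tau> [c]) * Wt k \<theta> d t (\<lambda>w\<in>tree_verts d t. \<tau> (c#w)))"
  proof (rule prod.cong[OF refl])
    fix c assume "c \<in> {..<d}"
    have "(\<Prod>w\<in>?V. ?g (c # w)) = ?g [c] * (\<Prod>w\<in>?V - {[]}. ?g (c # w))"
      by (rule prod.remove) (auto simp: finite_tree_verts nil_in_tree_verts)
    also have "(\<Prod>w\<in>?V - {[]}. ?g (c # w)) = Wt k \<theta> d t (\<lambda>w\<in>tree_verts d t. \<tau> (c#w))"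
      unfolding Wt_def by (intro prod.cong refl) (auto simp: butlast_in_tree_verts)
    finally show "(\<Prod>w\<in>?V. ?g (c # w)) = trans_prob k \<theta> i (\<tau> [c]) * Wt k \<theta> d t (\<lambda>w\<in>tree_verts d t. \<tau> (c#w))"
      by simp
  qed
  finally show ?thesis .
qed



lemma restrict_cond_Suc:
  assumes x: "x \<in> rev_configs k r d (Suc t)"
  shows "restrict (\<tau>([] := i)) (revealed_verts r d (Suc t)) = x \<longleftrightarrow>
     (\<forall>c\<in>{..<d}. restrict (\<lambda>w\<in>tree_verts d t. \<tau> (c#w)) (Sc r d t c) = (\<lambda>w\<in>Sc r d t c. x (c#w)))"
proof
  assume h: "restrict (\<tau>([] := i)) (revealed_verts r d (Suc t)) = x"
  show "\<forall>c\<in>{..<d}. restrict (\<lambda>w\<in>tree_verts d t. \<tau> (c#w)) (Sc r d t c) = (\<lambda>w\<in>Sc r d t c. x (c#w))"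
  proof (intro ballI ext)
    fix c w assume c: "c \<in> {..<d}"
    show "restrict (\<lambda>w\<in>tree_verts d t. \<tau> (c#w)) (Sc r d t c) w = (\<lambda>w\<in>Sc r d t c. x (c#w)) w"
    proof (cases "w \<in> Sc r d t c")
      case True
      hence "c # w \<in> revealed_verts r d (Suc t)" using c cons_in_revealed_Suc by auto
      hence "x (c#w) = \<tau> (c#w)" using h[symmetric] by simp
      thus ?thesis using True Sc_sub[of r d t c] by auto
    qed simp
  qed
next
  assume h: "\<forall>c\<in>{..<d}. restrict (\<lambda>w\<in>tree_verts d t. \<tau> (c#w)) (Sc r d t c) = (\<lambda>w\<in>Sc r d t c. x (c#w))"
  show "restrict (\<tau>([] := i)) (revealed_verts r d (Suc t)) = x"
  proof
    fix v show "restrict (\<tau>([] := i)) (revealed_verts r d (Suc t)) v = x v"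
    proof (cases "v \<in> revealed_verts r d (Suc t)")
      case True
      then obtain c w where v: "v = c # w" using nil_notin_revealed by (cases v) auto
      with True have cw: "c < d" "w \<in> Sc r d t c" using cons_in_revealed_Suc by auto
      have "restrict (\<lambda>w\<in>tree_verts d t. \<tau> (c#w)) (Sc r d t c) w = (\<lambda>w\<in>Sc r d t c. x (c#w)) w"
        using h cw by auto
      hence "\<tau> (c#w) = x (c#w)" using cw Sc_sub[of r d t c] by auto
      thus ?thesis using True v by simp
    next
      case False thus ?thesis using x by (auto simp: rev_configs_def PiE_def extensional_def)
    qed
  qed
qed

lemma mu_Suc:
  assumes x: "x \<in> rev_configs k r d (Suc t)" and i: "i \<in> {1..k}"
  shows "mu k \<theta> r d (Suc t) i x = (\<Prod>c\<in>{..<d}. Fc k \<theta> r d t c i (\<lambda>w\<in>Sc r d t c. x (c#w)))"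
proof -
  let ?A = "{1..k}" and ?V = "tree_verts d t" and ?U = "\<Union>c\<in>{..<d}. (#) c ` tree_verts d t"
  let ?R' = "revealed_verts r d (Suc t)" and ?R = "revealed_verts r d t"
  define h where "h c y = (if restrict y (Sc r d t c) = (\<lambda>w\<in>Sc r d t c. x (c#w))
       then trans_prob k \<theta> i (y []) * Wt k \<theta> d t y else 0)" for c y
  define f where "f \<tau> = (if restrict (\<tau>([] := i)) ?R' = x then Wt k \<theta> d (Suc t) (\<tau>([] := i)) else 0)" for \<tau>
  have "mu k \<theta> r d (Suc t) i x = (\<Sum>\<sigma>\<in>PiE (insert [] ?U) (\<lambda>_. ?A).
    if \<sigma> [] = i \<and> restrict \<sigma> ?R' = x then Wt k \<theta> d (Suc t) \<sigma> else 0)"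
    unfolding mu_alt tree_verts_Suc ..
  also have "\<dots> = (\<Sum>b\<in>?A. \<Sum>\<tau>\<in>PiE ?U (\<lambda>_. ?A).
    if (\<tau>([] := b)) [] = i \<and> restrict (\<tau>([] := b)) ?R' = x then Wt k \<theta> d (Suc t) (\<tau>([] := b)) else 0)"
    by (rule sum_PiE_insert) auto
  also have "\<dots> = (\<Sum>b\<in>?A. if b = i then (\<Sum>\<tau>\<in>PiE ?U (\<lambda>_. ?A). f \<tau>) else 0)"
    by (rule sum.cong[OF refl]) (auto simp: f_def)
  also have "\<dots> = (\<Sum>\<tau>\<in>PiE ?U (\<lambda>_. ?A). f \<tau>)"
    using i by (simp add: sum.delta')
  also have "\<dots> = (\<Sum>\<tau>\<in>PiE ?U (\<lambda>_. ?A). \<Prod>c\<in>{..<d}. h c (\<lambda>w\<in>?V. \<tau> (c#w)))"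
  proof (rule sum.cong[OF refl])
    fix \<tau> :: "nat list \<Rightarrow> nat"
    have res: "restrict (\<lambda>w\<in>?V. \<tau> (c#w)) (Sc r d t c) = (\<lambda>w\<in>Sc r d t c. \<tau> (c#w))" for c
      using Sc_sub[of r d t c] by (auto simp: restrict_def fun_eq_iff)
    show "f \<tau> = (\<Prod>c\<in>{..<d}. h c (\<lambda>w\<in>?V. \<tau> (c#w)))"
    proof (cases "restrict (\<tau>([] := i)) ?R' = x")
      case True
      hence all: "\<forall>c\<in>{..<d}. restrict (\<lambda>w\<in>?V. \<tau> (c#w)) (Sc r d t c) = (\<lambda>w\<in>Sc r d t c. x (c#w))"
        using restrict_cond_Suc[OF x] by blast
      have "f \<tau> = (\<Prod>c\<in>{..<d}. trans_prob k \<theta> i (\<tau> [c]) * Wt k \<theta> d t (\<lambda>w\<in>?V. \<tau> (c#w)))"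
        using True by (simp add: f_def Wt_Suc)
      also have "\<dots> = (\<Prod>c\<in>{..<d}. h c (\<lambda>w\<in>?V. \<tau> (c#w)))"
        using all by (intro prod.cong refl) (auto simp: h_def nil_in_tree_verts)
      finally show ?thesis .
    next
      case False
      then obtain c where c: "c \<in> {..<d}" "restrict (\<lambda>w\<in>?V. \<tau> (c#w)) (Sc r d t c) \<noteq> (\<lambda>w\<in>Sc r d t c. x (c#w))"
        using restrict_cond_Suc[OF x] by blast
      have "(\<Prod>c\<in>{..<d}. h c (\<lambda>w\<in>?V. \<tau> (c#w))) = 0"
        using c by (intro prod_zero) (auto simp: h_def)
      thus ?thesis using False by (simp add: f_def)
    qed
  qed
  also have "\<dots> = (\<Prod>c\<in>{..<d}. \<Sum>y\<in>PiE ?V (\<lambda>_. ?A). h c y)"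
    by (rule sum_PiE_split) (auto simp: finite_tree_verts)
  also have "\<dots> = (\<Prod>c\<in>{..<d}. Fc k \<theta> r d t c i (\<lambda>w\<in>Sc r d t c. x (c#w)))"
  proof (rule prod.cong[OF refl])
    fix c assume c: "c \<in> {..<d}"
    define z where "z = (\<lambda>w\<in>Sc r d t c. x (c#w))"
    have "(\<Sum>y\<in>PiE ?V (\<lambda>_. ?A). h c y) = (\<Sum>y\<in>PiE ?V (\<lambda>_. ?A). \<Sum>b\<in>?A. if y [] = b then h c y else 0)"
      by (intro sum.cong refl) (auto simp: nil_in_tree_verts sum.delta PiE_iff)
    also have "\<dots> = (\<Sum>b\<in>?A. \<Sum>y\<in>PiE ?V (\<lambda>_. ?A). if y [] = b then h c y else 0)"
      by (rule sum.swap)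
    also have "\<dots> = Fc k \<theta> r d t c i z"
    proof (cases "c < r")
      case False
      have "(\<Sum>y\<in>PiE ?V (\<lambda>_. ?A). if y [] = b then h c y else 0) = trans_prob k \<theta> i b * mu k \<theta> r d t b z" for b
        unfolding mu_alt sum_distrib_left
        using False by (intro sum.cong refl) (auto simp: h_def z_def Sc_def)
      thus ?thesis using False by (simp add: Fc_def)
    next
      case True
      have zn: "z [] \<in> ?A"
      proof -
        have "[c] \<in> ?R'" using c True cons_in_revealed_Suc[of c "[]" r d t] by (auto simp: Sc_def)
        thus ?thesis using x True by (auto simp: z_def Sc_def rev_configs_def PiE_iff)
      qed
      have eq: "restrict y (Sc r d t c) = z \<longleftrightarrow> y [] = z [] \<and> restrict y ?R = restrict z ?R" for y :: "nat list \<Rightarrow> nat"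
      proof
        assume "restrict y (Sc r d t c) = z"
        thus "y [] = z [] \<and> restrict y ?R = restrict z ?R"
          using True by (auto simp: Sc_def z_def restrict_def fun_eq_iff) metis+
      next
        assume "y [] = z [] \<and> restrict y ?R = restrict z ?R"
        thus "restrict y (Sc r d t c) = z"
          using True by (auto simp: Sc_def z_def restrict_def fun_eq_iff split: if_splits)
      qed
      have "(\<Sum>y\<in>PiE ?V (\<lambda>_. ?A). if y [] = b then h c y else 0) =
            (if b = z [] then trans_prob k \<theta> i b * mu k \<theta> r d t b (restrict z ?R) else 0)" for b
        unfolding mu_alt sum_distrib_left
        by (cases "b = z []") (auto simp: h_def z_def[symmetric] eq intro!: sum.cong sum.neutral)
      hence "(\<Sum>b\<in>?A. \<Sum>y\<in>PiE ?V (\<lambda>_. ?A). if y [] = b then h c y else 0) =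
             trans_prob k \<theta> i (z []) * mu k \<theta> r d t (z []) (restrict z ?R)"
        using zn by (simp add: sum.delta')
      thus ?thesis using True by (simp add: Fc_def)
    qed
    finally show "(\<Sum>y\<in>PiE ?V (\<lambda>_. ?A). h c y) = Fc k \<theta> r d t c i (\<lambda>w\<in>Sc r d t c. x (c#w))"
      by (simp add: z_def)
  qed
  finally show ?thesis .
qed



lemma sum_PiE_insert_restrict:
  assumes "a \<notin> S"
  shows "(\<Sum>z\<in>PiE (insert a S) (\<lambda>_. A). g (z a) (restrict z S)) = (\<Sum>b\<in>A. \<Sum>\<tau>\<in>PiE S (\<lambda>_. A). g b \<tau>)"
proof -
  have "(\<Sum>z\<in>PiE (insert a S) (\<lambda>_. A). g (z a) (restrict z S)) =
        (\<Sum>b\<in>A. \<Sum>\<tau>\<in>PiE S (\<lambda>_. A). g ((\<tau>(a:=b)) a) (restrict (\<tau>(a:=b)) S))"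
    by (rule sum_PiE_insert[OF assms])
  also have "\<dots> = (\<Sum>b\<in>A. \<Sum>\<tau>\<in>PiE S (\<lambda>_. A). g b \<tau>)"
  proof (intro sum.cong refl)
    fix b \<tau> assume "\<tau> \<in> PiE S (\<lambda>_. A)"
    hence "restrict (\<tau>(a:=b)) S = \<tau>" using assms
      by (auto simp: restrict_def fun_eq_iff PiE_def extensional_def)
    thus "g ((\<tau>(a:=b)) a) (restrict (\<tau>(a:=b)) S) = g b \<tau>" by simp
  qed
  finally show ?thesis .
qed

locale TS =
  fixes k :: nat and \<theta> :: real and r d :: nat
  assumes kpos: "0 < k" and th0: "0 < \<theta>" and th1: "\<theta> < 1"
begin

abbreviation "P \<equiv> trans_prob k \<theta>"
abbreviation "m \<equiv> mu k \<theta> r d"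
abbreviation "RC \<equiv> rev_configs k r d"
abbreviation "A \<equiv> {1..k}"
abbreviation "R \<equiv> revealed_verts r d"

lemma P_pos: "P a b > 0"
  using kpos th0 th1 by (auto simp: trans_prob_def intro!: add_pos_nonneg divide_pos_pos)

lemma P_row: assumes "a \<in> A" shows "(\<Sum>b\<in>A. P a b) = 1"
proof -
  have "(\<Sum>b\<in>A. P a b) = (\<Sum>b\<in>A. (1 - \<theta>) / real k + (if b = a then \<theta> else 0))"
    by (intro sum.cong refl) (auto simp: trans_prob_def)
  also have "\<dots> = real k * ((1 - \<theta>) / real k) + \<theta>"
    using assms by (simp add: sum.distrib sum.delta')
  also have "\<dots> = 1" using kpos by simp
  finally show ?thesis .
qed

lemma P_diff: "P a b - P j b = \<theta> * ((if b = a then 1 else 0) - (if b = j then 1 else 0))"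
  by (auto simp: trans_prob_def)

lemma RC_0: "RC 0 = {\<lambda>_. undefined}"
  by (simp add: rev_configs_def revealed_verts_0)

lemma mu_0: assumes "i \<in> A" shows "m 0 i x' = (if x' = (\<lambda>_. undefined) then 1 else 0)"
proof -
  have "m 0 i x' = (\<Sum>y\<in>PiE {[]::nat list} (\<lambda>_. A). if y [] = i \<and> x' = (\<lambda>_. undefined) then 1 else 0)"
    unfolding mu_alt Wt_def tree_verts_0 revealed_verts_0 by (rule sum.cong) (auto simp: restrict_def)
  also have "\<dots> = (\<Sum>b\<in>A. \<Sum>\<tau>\<in>PiE ({}::nat list set) (\<lambda>_. A). if (\<tau>([]:=b)) [] = i \<and> x' = (\<lambda>_. undefined) then 1 else 0)"
    by (rule sum_PiE_insert) simp
  also have "\<dots> = (if x' = (\<lambda>_. undefined) then 1 else 0)"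
    using assms by (simp add: sum.delta' conj_commute)
  finally show ?thesis .
qed

lemma RC_Suc: "RC (Suc t) = PiE (\<Union>c\<in>{..<d}. (#) c ` Sc r d t c) (\<lambda>_. A)"
  by (simp add: rev_configs_def revealed_verts_Suc)

lemma z_in_Sc:
  assumes "x \<in> RC (Suc t)" "c \<in> {..<d}"
  shows "(\<lambda>w\<in>Sc r d t c. x (c#w)) \<in> PiE (Sc r d t c) (\<lambda>_. A)"
  using assms cons_in_revealed_Suc[of c _ r d t] by (auto simp: rev_configs_def PiE_iff)

lemma Sc_PiE_lt:
  assumes "c < r" "z \<in> PiE (Sc r d t c) (\<lambda>_. A)"
  shows "z [] \<in> A" "restrict z (R t) \<in> RC t"
  using assms by (auto simp: Sc_def rev_configs_def PiE_iff)

lemma Sc_PiE_ge: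
  assumes "\<not> c < r" "z \<in> PiE (Sc r d t c) (\<lambda>_. A)"
  shows "z \<in> RC t"
  using assms by (auto simp: Sc_def rev_configs_def)

lemma finite_RC: "finite (RC t)"
  by (auto simp: rev_configs_def intro!: finite_PiE finite_revealed)

lemma mu_props: "i \<in> A \<Longrightarrow> (\<forall>x\<in>RC t. m t i x > 0) \<and> (\<Sum>x\<in>RC t. m t i x) = 1"
proof (induction t arbitrary: i)
  case 0
  thus ?case by (simp add: RC_0 mu_0)
next
  case (Suc t)
  have Fpos: "Fc k \<theta> r d t c i z > 0" if "z \<in> PiE (Sc r d t c) (\<lambda>_. A)" "i \<in> A" for c z i
  proof (cases "c < r")
    case True thus ?thesis using Sc_PiE_lt[OF True that(1)] Suc.IH P_pos
      by (auto simp: Fc_def intro!: mult_pos_pos)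
  next
    case False
    hence "z \<in> RC t" using Sc_PiE_ge that by blast
    thus ?thesis using False Suc.IH P_pos kpos
      by (auto simp: Fc_def intro!: sum_pos mult_pos_pos)
  qed
  have Fsum: "(\<Sum>z\<in>PiE (Sc r d t c) (\<lambda>_. A). Fc k \<theta> r d t c i z) = 1" if "i \<in> A" for c i
  proof (cases "c < r")
    case True
    have "(\<Sum>z\<in>PiE (Sc r d t c) (\<lambda>_. A). Fc k \<theta> r d t c i z) =
          (\<Sum>z\<in>PiE (insert [] (R t)) (\<lambda>_. A). P i (z []) * m t (z []) (restrict z (R t)))"
      using True by (simp add: Fc_def Sc_def)
    also have "\<dots> = (\<Sum>b\<in>A. \<Sum>\<tau>\<in>RC t. P i b * m t b \<tau>)"
      unfolding rev_configs_def by (rule sum_PiE_insert_restrict[OF nil_notin_revealed])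
    also have "\<dots> = (\<Sum>b\<in>A. P i b)"
      using Suc.IH by (simp add: sum_distrib_left[symmetric])
    finally show ?thesis using P_row that by simp
  next
    case False
    have "(\<Sum>z\<in>PiE (Sc r d t c) (\<lambda>_. A). Fc k \<theta> r d t c i z) = (\<Sum>z\<in>RC t. \<Sum>b\<in>A. P i b * m t b z)"
      using False by (simp add: Fc_def Sc_def rev_configs_def)
    also have "\<dots> = (\<Sum>b\<in>A. P i b * (\<Sum>z\<in>RC t. m t b z))"
      by (subst sum.swap) (simp add: sum_distrib_left)
    also have "\<dots> = (\<Sum>b\<in>A. P i b)"
      using Suc.IH by simp
    finally show ?thesis using P_row that by simp
  qed
  have pos: "\<forall>x\<in>RC (Suc t). m (Suc t) i x > 0"
  proof
    fix x assume x: "x \<in> RC (Suc t)"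
    show "m (Suc t) i x > 0"
      unfolding mu_Suc[OF x Suc.prems]
      by (rule prod_pos) (use Fpos z_in_Sc[OF x] Suc.prems in auto)
  qed
  have "(\<Sum>x\<in>RC (Suc t). m (Suc t) i x) = (\<Sum>x\<in>RC (Suc t). \<Prod>c\<in>{..<d}. Fc k \<theta> r d t c i (\<lambda>w\<in>Sc r d t c. x (c#w)))"
    using mu_Suc Suc.prems by (intro sum.cong refl) auto
  also have "\<dots> = (\<Prod>c\<in>{..<d}. \<Sum>z\<in>PiE (Sc r d t c) (\<lambda>_. A). Fc k \<theta> r d t c i z)"
    unfolding RC_Suc by (rule sum_PiE_split) (auto simp: finite_Sc)
  also have "\<dots> = 1" using Fsum Suc.prems by simp
  finally show ?case using pos by simp
qed

end


lemma sq_div_expand: "(q::real) \<noteq> 0 \<Longrightarrow> p^2 / q = q + 2 * (p - q) + (p - q)^2 / q"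
  by (simp add: field_simps power2_eq_square)

context TS
begin

lemma mu_pos: "i \<in> A \<Longrightarrow> x \<in> RC t \<Longrightarrow> m t i x > 0"
  using mu_props by blast

lemma mu_sum: "i \<in> A \<Longrightarrow> (\<Sum>x\<in>RC t. m t i x) = 1"
  using mu_props by blast

lemma chi_sq_form:
  assumes "a \<in> A" "b \<in> A"
  shows "(\<Sum>z\<in>RC t. (m t a z - m t b z)^2 / m t b z) = chi2 (RC t) (m t a) (m t b)"
proof -
  have "(\<Sum>z\<in>RC t. (m t a z - m t b z)^2 / m t b z) = (\<Sum>z\<in>RC t. (m t a z)^2 / m t b z - 2 * m t a z + m t b z)"
  proof (intro sum.cong refl)
    fix z assume "z \<in> RC t"
    hence "m t b z \<noteq> 0" using mu_pos[OF assms(2)] by (metis less_irrefl)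
    thus "(m t a z - m t b z)^2 / m t b z = (m t a z)^2 / m t b z - 2 * m t a z + m t b z"
      by (simp add: field_simps power2_eq_square)
  qed
  also have "\<dots> = (\<Sum>z\<in>RC t. (m t a z)^2 / m t b z) - 2 * (\<Sum>z\<in>RC t. m t a z) + (\<Sum>z\<in>RC t. m t b z)"
    by (simp add: sum.distrib sum_subtractf sum_distrib_left)
  finally show ?thesis using mu_sum assms by (simp add: chi2_def)
qed

lemma Fc_pos: "z \<in> PiE (Sc r d t c) (\<lambda>_. A) \<Longrightarrow> i \<in> A \<Longrightarrow> Fc k \<theta> r d t c i z > 0"
proof (cases "c < r")
  case True
  assume that: "z \<in> PiE (Sc r d t c) (\<lambda>_. A)" "i \<in> A"
  thus ?thesis using Sc_PiE_lt[OF True that(1)] mu_pos P_pos True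
    by (auto simp: Fc_def intro!: mult_pos_pos)
next
  case False
  assume that: "z \<in> PiE (Sc r d t c) (\<lambda>_. A)" "i \<in> A"
  hence "z \<in> RC t" using Sc_PiE_ge False by blast
  thus ?thesis using False mu_pos P_pos kpos
    by (auto simp: Fc_def intro!: sum_pos mult_pos_pos)
qed

lemma chi2_Suc_eq:
  assumes i: "i \<in> A" and j: "j \<in> A"
  shows "1 + chi2 (RC (Suc t)) (m (Suc t) i) (m (Suc t) j) =
         (\<Prod>c\<in>{..<d}. \<Sum>z\<in>PiE (Sc r d t c) (\<lambda>_. A). (Fc k \<theta> r d t c i z)^2 / Fc k \<theta> r d t c j z)"
proof -
  have "1 + chi2 (RC (Suc t)) (m (Suc t) i) (m (Suc t) j) = (\<Sum>x\<in>RC (Suc t). (m (Suc t) i x)^2 / m (Suc t) j x)"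
    by (simp add: chi2_def)
  also have "\<dots> = (\<Sum>x\<in>RC (Suc t). \<Prod>c\<in>{..<d}. (Fc k \<theta> r d t c i (\<lambda>w\<in>Sc r d t c. x (c#w)))^2 / Fc k \<theta> r d t c j (\<lambda>w\<in>Sc r d t c. x (c#w)))"
    using i j by (intro sum.cong refl) (simp add: mu_Suc prod_dividef prod_power_distrib)
  also have "\<dots> = (\<Prod>c\<in>{..<d}. \<Sum>z\<in>PiE (Sc r d t c) (\<lambda>_. A). (Fc k \<theta> r d t c i z)^2 / Fc k \<theta> r d t c j z)"
    unfolding RC_Suc by (rule sum_PiE_split) (auto simp: finite_Sc)
  finally show ?thesis .
qed

definition X :: real where "X = \<theta>^2 * (1 / (\<theta> + (1 - \<theta>) / real k) + 1 / ((1 - \<theta>) / real k))"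

lemma X_nonneg: "X \<ge> 0"
  using th0 th1 kpos by (auto simp: X_def intro!: add_nonneg_nonneg divide_nonneg_nonneg)

lemma P_chi:
  assumes i: "i \<in> A" and j: "j \<in> A"
  shows "(\<Sum>b\<in>A. (P i b)^2 / P j b) \<le> 1 + X"
proof -
  have "(\<Sum>b\<in>A. (P i b)^2 / P j b) = (\<Sum>b\<in>A. P j b + 2 * (P i b - P j b) + (P i b - P j b)^2 / P j b)"
    using P_pos by (intro sum.cong refl sq_div_expand) (metis less_irrefl)
  also have "\<dots> = (\<Sum>b\<in>A. P j b) + 2 * ((\<Sum>b\<in>A. P i b) - (\<Sum>b\<in>A. P j b)) + (\<Sum>b\<in>A. (P i b - P j b)^2 / P j b)"
    by (simp add: sum.distrib sum_subtractf sum_distrib_left)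
  also have "\<dots> = 1 + (\<Sum>b\<in>A. (P i b - P j b)^2 / P j b)"
    using P_row i j by simp
  also have "(\<Sum>b\<in>A. (P i b - P j b)^2 / P j b) \<le> X"
  proof (cases "i = j")
    case True thus ?thesis using X_nonneg by simp
  next
    case False
    have "(\<Sum>b\<in>A. (P i b - P j b)^2 / P j b) =
          (\<Sum>b\<in>A. (if b = i then \<theta>^2 / P j i else 0) + (if b = j then \<theta>^2 / P j j else 0))"
      using False by (intro sum.cong refl) (auto simp: P_diff)
    also have "\<dots> = \<theta>^2 / P j i + \<theta>^2 / P j j"
      using i j by (simp add: sum.distrib sum.delta')
    also have "\<dots> = X" using False by (simp add: X_def trans_prob_def field_simps)
    finally show ?thesis by simp
  qed
  finally show ?thesis by simp
qed

lemma comp_lt: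
  assumes c: "c < r" and i: "i \<in> A" and j: "j \<in> A"
  shows "(\<Sum>z\<in>PiE (Sc r d t c) (\<lambda>_. A). (Fc k \<theta> r d t c i z)^2 / Fc k \<theta> r d t c j z) = (\<Sum>b\<in>A. (P i b)^2 / P j b)"
proof -
  have "(\<Sum>z\<in>PiE (Sc r d t c) (\<lambda>_. A). (Fc k \<theta> r d t c i z)^2 / Fc k \<theta> r d t c j z) =
        (\<Sum>z\<in>PiE (insert [] (R t)) (\<lambda>_. A). (\<lambda>b \<tau>. (P i b * m t b \<tau>)^2 / (P j b * m t b \<tau>)) (z []) (restrict z (R t)))"
    using c by (simp add: Fc_def Sc_def)
  also have "\<dots> = (\<Sum>b\<in>A. \<Sum>\<tau>\<in>RC t. (P i b * m t b \<tau>)^2 / (P j b * m t b \<tau>))"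
    unfolding rev_configs_def by (rule sum_PiE_insert_restrict[OF nil_notin_revealed])
  also have "\<dots> = (\<Sum>b\<in>A. (P i b)^2 / P j b * (\<Sum>\<tau>\<in>RC t. m t b \<tau>))"
    unfolding sum_distrib_left
  proof (intro sum.cong refl)
    fix b \<tau> assume "b \<in> A" "\<tau> \<in> RC t"
    hence "m t b \<tau> > 0" by (rule mu_pos)
    thus "(P i b * m t b \<tau>)^2 / (P j b * m t b \<tau>) = (P i b)^2 / P j b * m t b \<tau>"
      using P_pos[of j b] by (simp add: field_simps power2_eq_square)
  qed
  also have "\<dots> = (\<Sum>b\<in>A. (P i b)^2 / P j b)" using mu_sum by simp
  finally show ?thesis .
qed

end


lemma inv_mix_le:
  fixes w y :: "nat \<Rightarrow> real"
  assumes "finite S" "S \<noteq> {}" "(\<Sum>b\<in>S. w b) = 1" "\<And>b. b \<in> S \<Longrightarrow> w b \<ge> 0" "\<And>b. b \<in> S \<Longrightarrow> y b > 0"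
  shows "1 / (\<Sum>b\<in>S. w b * y b) \<le> (\<Sum>b\<in>S. w b / y b)"
proof -
  have "inverse (\<Sum>b\<in>S. w b *\<^sub>R y b) \<le> (\<Sum>b\<in>S. w b * inverse (y b))"
    by (rule convex_on_sum[OF assms(1,2) convex_on_inverse[of "{0<..}"] assms(3,4)]) (use assms(5) in auto)
  thus ?thesis by (simp add: divide_inverse)
qed

lemma sq_tri: "((u::real) - v)^2 \<le> 2 * u^2 + 2 * v^2"
proof -
  have "2 * u^2 + 2 * v^2 - (u - v)^2 = (u + v)^2" by (simp add: power2_eq_square algebra_simps)
  thus ?thesis by (smt (verit) zero_le_power2)
qed

context TS
begin

lemma comp_ge:
  assumes c: "\<not> c < r" and i: "i \<in> A" and j: "j \<in> A"
    and C: "\<And>a b. a \<in> A \<Longrightarrow> b \<in> A \<Longrightarrow> chi2 (RC t) (m t a) (m t b) \<le> C"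
  shows "(\<Sum>z\<in>PiE (Sc r d t c) (\<lambda>_. A). (Fc k \<theta> r d t c i z)^2 / Fc k \<theta> r d t c j z) \<le> 1 + 4 * \<theta>^2 * C"
proof -
  define H where "H a z = (\<Sum>b\<in>A. P a b * m t b z)" for a z
  have Hpos: "H a z > 0" if "z \<in> RC t" for a z
    unfolding H_def using that mu_pos P_pos kpos by (auto intro!: sum_pos mult_pos_pos)
  have Hsum: "(\<Sum>z\<in>RC t. H a z) = 1" if "a \<in> A" for a
  proof -
    have "(\<Sum>z\<in>RC t. H a z) = (\<Sum>b\<in>A. P a b * (\<Sum>z\<in>RC t. m t b z))"
      unfolding H_def by (subst sum.swap) (simp add: sum_distrib_left)
    thus ?thesis using mu_sum P_row that by simp
  qed
  have Hdiff: "H i z - H j z = \<theta> * (m t i z - m t j z)" for z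
  proof -
    have "H i z - H j z = (\<Sum>b\<in>A. (P i b - P j b) * m t b z)"
      unfolding H_def by (simp add: sum_subtractf left_diff_distrib)
    also have "\<dots> = (\<Sum>b\<in>A. (if b = i then \<theta> * m t i z else 0) - (if b = j then \<theta> * m t j z else 0))"
      by (intro sum.cong refl) (auto simp: P_diff)
    also have "\<dots> = \<theta> * (m t i z - m t j z)"
      using i j by (simp add: sum_subtractf sum.delta' right_diff_distrib)
    finally show ?thesis .
  qed
  have key: "(m t i z - m t j z)^2 / H j z \<le> (\<Sum>b\<in>A. P j b * (2 * ((m t i z - m t b z)^2 / m t b z) + 2 * ((m t j z - m t b z)^2 / m t b z)))"
    if z: "z \<in> RC t" for z
  proof -
    have "1 / H j z \<le> (\<Sum>b\<in>A. P j b / m t b z)"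
      unfolding H_def
      by (rule inv_mix_le) (use kpos P_row[OF j] P_pos mu_pos z in \<open>auto intro: less_imp_le\<close>)
    hence "(m t i z - m t j z)^2 * (1 / H j z) \<le> (m t i z - m t j z)^2 * (\<Sum>b\<in>A. P j b / m t b z)"
      by (rule mult_left_mono) simp
    also have "\<dots> = (\<Sum>b\<in>A. P j b * ((m t i z - m t j z)^2 / m t b z))"
      unfolding sum_distrib_left by (intro sum.cong refl) (simp add: ac_simps)
    also have "\<dots> \<le> (\<Sum>b\<in>A. P j b * (2 * ((m t i z - m t b z)^2 / m t b z) + 2 * ((m t j z - m t b z)^2 / m t b z)))"
    proof (rule sum_mono)
      fix b assume b: "b \<in> A"
      have mb: "m t b z > 0" using mu_pos[OF b z] .
      have "(m t i z - m t j z)^2 \<le> 2 * (m t i z - m t b z)^2 + 2 * (m t j z - m t b z)^2"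
        using sq_tri[of "m t i z - m t b z" "m t j z - m t b z"] by simp
      hence "(m t i z - m t j z)^2 / m t b z \<le> (2 * (m t i z - m t b z)^2 + 2 * (m t j z - m t b z)^2) / m t b z"
        using mb by (simp add: divide_right_mono)
      thus "P j b * ((m t i z - m t j z)^2 / m t b z) \<le> P j b * (2 * ((m t i z - m t b z)^2 / m t b z) + 2 * ((m t j z - m t b z)^2 / m t b z))"
        using P_pos[of j b] by (intro mult_left_mono) (auto simp: add_divide_distrib)
    qed
    finally show ?thesis by simp
  qed
  have "(\<Sum>z\<in>PiE (Sc r d t c) (\<lambda>_. A). (Fc k \<theta> r d t c i z)^2 / Fc k \<theta> r d t c j z) = (\<Sum>z\<in>RC t. (H i z)^2 / H j z)"
    using c by (simp add: Fc_def Sc_def rev_configs_def H_def)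
  also have "\<dots> = (\<Sum>z\<in>RC t. H j z + 2 * (H i z - H j z) + \<theta>^2 * ((m t i z - m t j z)^2 / H j z))"
  proof (intro sum.cong refl)
    fix z assume "z \<in> RC t"
    hence "H j z \<noteq> 0" using Hpos by (metis less_irrefl)
    thus "(H i z)^2 / H j z = H j z + 2 * (H i z - H j z) + \<theta>^2 * ((m t i z - m t j z)^2 / H j z)"
      by (subst sq_div_expand[of "H j z" "H i z"]) (simp_all add: Hdiff power_mult_distrib)
  qed
  also have "\<dots> = (\<Sum>z\<in>RC t. H j z) + 2 * ((\<Sum>z\<in>RC t. H i z) - (\<Sum>z\<in>RC t. H j z)) + \<theta>^2 * (\<Sum>z\<in>RC t. (m t i z - m t j z)^2 / H j z)"
    by (simp add: sum.distrib sum_subtractf sum_distrib_left)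
  also have "\<dots> = 1 + \<theta>^2 * (\<Sum>z\<in>RC t. (m t i z - m t j z)^2 / H j z)"
    using Hsum i j by simp
  also have "(\<Sum>z\<in>RC t. (m t i z - m t j z)^2 / H j z) \<le> 4 * C"
  proof -
    have "(\<Sum>z\<in>RC t. (m t i z - m t j z)^2 / H j z) \<le>
          (\<Sum>z\<in>RC t. \<Sum>b\<in>A. P j b * (2 * ((m t i z - m t b z)^2 / m t b z) + 2 * ((m t j z - m t b z)^2 / m t b z)))"
      by (rule sum_mono) (rule key)
    also have "\<dots> = (\<Sum>b\<in>A. P j b * (2 * chi2 (RC t) (m t i) (m t b) + 2 * chi2 (RC t) (m t j) (m t b)))"
    proof (subst sum.swap, intro sum.cong refl)
      fix b assume b: "b \<in> A"
      have "(\<Sum>z\<in>RC t. P j b * (2 * ((m t i z - m t b z)^2 / m t b z) + 2 * ((m t j z - m t b z)^2 / m t b z)))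
          = P j b * (2 * (\<Sum>z\<in>RC t. (m t i z - m t b z)^2 / m t b z) + 2 * (\<Sum>z\<in>RC t. (m t j z - m t b z)^2 / m t b z))"
        by (simp only: sum_distrib_left[symmetric] sum.distrib)
      thus "(\<Sum>z\<in>RC t. P j b * (2 * ((m t i z - m t b z)^2 / m t b z) + 2 * ((m t j z - m t b z)^2 / m t b z)))
          = P j b * (2 * chi2 (RC t) (m t i) (m t b) + 2 * chi2 (RC t) (m t j) (m t b))"
        by (simp only: chi_sq_form[OF i b] chi_sq_form[OF j b])
    qed
    also have "\<dots> \<le> (\<Sum>b\<in>A. P j b * (4 * C))"
    proof (intro sum_mono mult_left_mono)
      fix b assume b: "b \<in> A"
      show "2 * chi2 (RC t) (m t i) (m t b) + 2 * chi2 (RC t) (m t j) (m t b) \<le> 4 * C"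
        using C[OF i b] C[OF j b] by simp
      show "0 \<le> P j b" using P_pos[of j b] by simp
    qed
    also have "\<dots> = 4 * C" using P_row[OF j] by (simp add: sum_distrib_right[symmetric])
    finally show ?thesis .
  qed
  hence "1 + \<theta>^2 * (\<Sum>z\<in>RC t. (m t i z - m t j z)^2 / H j z) \<le> 1 + \<theta>^2 * (4 * C)"
    by (intro add_left_mono mult_left_mono) auto
  finally show ?thesis by simp
qed

end


lemma ln_lower2:
  assumes u: "0 \<le> (u::real)"
  shows "u - u^2/2 \<le> ln (1 + u)"
proof -
  have "(\<lambda>x. x - x^2/2 - ln(1+x)) u \<le> (\<lambda>x. x - x^2/2 - ln(1+x)) 0"
  proof (rule deriv_nonpos_imp_antimono[where g'="\<lambda>x. 1 - x - 1/(1+x)" and g="\<lambda>x. x - x^2/2 - ln(1+x)"])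
    fix x :: real assume x: "x \<in> {0..u}"
    show "((\<lambda>x. x - x^2/2 - ln(1+x)) has_real_derivative (1 - x - 1/(1+x))) (at x)"
      using x by (intro derivative_eq_intros refl) (auto simp: power2_eq_square)
    have "(1 - x) * (1 + x) \<le> 1" by (simp add: algebra_simps)
    hence "1 - x \<le> 1 / (1 + x)" using x by (simp add: field_simps)
    thus "1 - x - 1/(1+x) \<le> 0" by simp
  qed (use u in auto)
  thus ?thesis by simp
qed

lemma num_step:
  fixes X Bv D e :: real and r n :: nat
  assumes X: "0 \<le> X" and B0: "0 \<le> Bv" and BD: "Bv \<le> D"
    and hr: "real r * ln (1 + X) = D * Bv / 2" and hn: "real n * e = 1 - D" and e0: "0 \<le> e"
  shows "(1 + X)^r * (1 + e * Bv)^n \<le> 1 + Bv"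
proof -
  have e1: "(1 + X)^r = exp (D * Bv / 2)"
  proof -
    have "exp (D * Bv / 2) = exp (real r * ln (1 + X))" using hr by simp
    also have "\<dots> = exp (ln (1 + X)) ^ r" by (rule exp_of_nat_mult)
    also have "\<dots> = (1 + X)^r" using X by simp
    finally show ?thesis by simp
  qed
  have e2: "(1 + e * Bv)^n \<le> exp ((1 - D) * Bv)"
  proof -
    have "(1 + e * Bv)^n \<le> exp (e * Bv)^n"
      using e0 B0 by (intro power_mono) auto
    also have "\<dots> = exp (real n * (e * Bv))" by (simp add: exp_of_nat_mult)
    also have "\<dots> = exp ((1 - D) * Bv)" using hn by (simp add: mult.assoc[symmetric])
    finally show ?thesis .
  qed
  have "(1 + X)^r * (1 + e * Bv)^n \<le> exp (D * Bv / 2) * exp ((1 - D) * Bv)"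
    unfolding e1 by (rule mult_left_mono[OF e2]) simp
  also have "\<dots> = exp (Bv - D * Bv / 2)" by (simp add: exp_add[symmetric] algebra_simps)
  also have "\<dots> \<le> exp (Bv - Bv^2 / 2)"
  proof -
    have "Bv * Bv \<le> D * Bv" using B0 BD by (intro mult_right_mono) auto
    thus ?thesis by (simp add: power2_eq_square)
  qed
  also have "\<dots> \<le> exp (ln (1 + Bv))" using ln_lower2[OF B0] by simp
  also have "\<dots> = 1 + Bv" using B0 by simp
  finally show ?thesis .
qed

lemma prod_if_lt:
  fixes a b :: real
  assumes "r \<le> d"
  shows "(\<Prod>c\<in>{..<d}. if c < r then a else b) = a^r * b^(d - r)"
proof -
  have "(\<Prod>c\<in>{..<d}. if c < r then a else b) = (\<Prod>c\<in>{..<d} \<inter> {c. c < r}. a) * (\<Prod>c\<in>{..<d} \<inter> - {c. c < r}. b)"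
    by (rule prod.If_cases) simp
  also have "{..<d} \<inter> {c. c < r} = {..<r}" using assms by auto
  also have "{..<d} \<inter> - {c. c < r} = {r..<d}" by auto
  finally show ?thesis by simp
qed

context TS
begin

lemma chi2_nonneg_sum: "i \<in> A \<Longrightarrow> j \<in> A \<Longrightarrow> 0 \<le> (\<Sum>z\<in>PiE (Sc r d t c) (\<lambda>_. A). (Fc k \<theta> r d t c i z)^2 / Fc k \<theta> r d t c j z)"
  using Fc_pos by (intro sum_nonneg divide_nonneg_pos) auto

lemma chi2_step:
  assumes rd: "r \<le> d" and i: "i \<in> A" and j: "j \<in> A" and C0: "0 \<le> C"
    and C: "\<And>a b. a \<in> A \<Longrightarrow> b \<in> A \<Longrightarrow> chi2 (RC t) (m t a) (m t b) \<le> C"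
  shows "1 + chi2 (RC (Suc t)) (m (Suc t) i) (m (Suc t) j) \<le> (1 + X)^r * (1 + 4 * \<theta>^2 * C)^(d - r)"
proof -
  have "1 + chi2 (RC (Suc t)) (m (Suc t) i) (m (Suc t) j) \<le> (\<Prod>c\<in>{..<d}. if c < r then 1 + X else 1 + 4 * \<theta>^2 * C)"
    unfolding chi2_Suc_eq[OF i j]
  proof (rule prod_mono, rule conjI)
    fix c assume "c \<in> {..<d}"
    show "0 \<le> (\<Sum>z\<in>PiE (Sc r d t c) (\<lambda>_. A). (Fc k \<theta> r d t c i z)^2 / Fc k \<theta> r d t c j z)"
      by (rule chi2_nonneg_sum[OF i j])
    show "(\<Sum>z\<in>PiE (Sc r d t c) (\<lambda>_. A). (Fc k \<theta> r d t c i z)^2 / Fc k \<theta> r d t c j z) \<le> (if c < r then 1 + X else 1 + 4 * \<theta>^2 * C)"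
    proof (cases "c < r")
      case True thus ?thesis using comp_lt[OF True i j] P_chi[OF i j] by simp
    next
      case False thus ?thesis using comp_ge[OF False i j C] by simp
    qed
  qed
  also have "\<dots> = (1 + X)^r * (1 + 4 * \<theta>^2 * C)^(d - r)" by (rule prod_if_lt[OF rd])
  finally show ?thesis .
qed

lemma chi2_bound:
  assumes rd: "r \<le> d" and B0: "0 \<le> Bv" and BD: "Bv \<le> D"
    and hr: "real r * ln (1 + X) = D * Bv / 2" and hn: "real (d - r) * (4 * \<theta>^2) = 1 - D"
  shows "i \<in> A \<Longrightarrow> j \<in> A \<Longrightarrow> chi2 (RC t) (m t i) (m t j) \<le> Bv"
proof (induction t arbitrary: i j)
  case 0
  thus ?case using B0 by (simp add: RC_0 chi2_def mu_0)
next
  case (Suc t)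
  have "1 + chi2 (RC (Suc t)) (m (Suc t) i) (m (Suc t) j) \<le> (1 + X)^r * (1 + 4 * \<theta>^2 * Bv)^(d - r)"
    by (rule chi2_step[OF rd Suc.prems B0 Suc.IH])
  also have "\<dots> \<le> 1 + Bv"
    by (rule num_step[OF X_nonneg B0 BD hr hn]) simp
  finally show ?case by simp
qed

end


context TS
begin

lemma one_plus_chi2_pos: "i \<in> A \<Longrightarrow> j \<in> A \<Longrightarrow> 0 < 1 + chi2 (RC t) (m t i) (m t j)"
proof -
  assume i: "i \<in> A" and j: "j \<in> A"
  have ne: "RC t \<noteq> {}" using kpos by (auto simp: rev_configs_def PiE_eq_empty_iff)
  have "0 < (\<Sum>x\<in>RC t. (m t i x)^2 / m t j x)"
  proof (rule sum_pos[OF finite_RC ne])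
    fix x assume x: "x \<in> RC t"
    have "m t i x > 0" "m t j x > 0" using mu_pos[OF i x] mu_pos[OF j x] by auto
    thus "0 < (m t i x)^2 / m t j x" by simp
  qed
  thus ?thesis by (simp add: chi2_def)
qed

lemma sum_phi_bound:
  assumes B0: "0 \<le> Bv" and chiB: "\<And>i j. i \<in> A \<Longrightarrow> j \<in> A \<Longrightarrow> chi2 (RC t) (m t i) (m t j) \<le> Bv"
    and Phi: "\<forall>x \<in> RC t. \<Phi> x \<in> A"
  shows "(\<Sum>x\<in>RC t. m t (\<Phi> x) x) \<le> (real k + 1 + Bv) / 2"
proof -
  define L where "L = (real k + 1 + Bv) / 2"
  have L0: "L > 0" using B0 by (simp add: L_def)
  have one: "1 \<in> A" using kpos by simp
  have pt: "m t (\<Phi> x) x \<le> (\<Sum>i\<in>A. (m t i x)^2 / m t 1 x) / (2 * L) + L * m t 1 x / 2" if x: "x \<in> RC t" for x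
  proof -
    let ?a = "m t (\<Phi> x) x" and ?v = "m t 1 x"
    have v: "?v > 0" using mu_pos[OF one x] .
    have "0 \<le> (?a - L * ?v)^2" by simp
    hence "2 * ?a * (L * ?v) \<le> ?a^2 + (L * ?v)^2" by (simp add: power2_eq_square algebra_simps)
    hence "?a \<le> ?a^2 / ?v / (2 * L) + L * ?v / 2"
      using v L0 by (simp add: field_simps power2_eq_square)
    also have "?a^2 \<le> (\<Sum>i\<in>A. (m t i x)^2)"
      using Phi x by (intro member_le_sum) auto
    hence "?a^2 / ?v / (2 * L) \<le> (\<Sum>i\<in>A. (m t i x)^2) / ?v / (2 * L)"
      using v L0 by (intro divide_right_mono) auto
    also have "(\<Sum>i\<in>A. (m t i x)^2) / ?v = (\<Sum>i\<in>A. (m t i x)^2 / ?v)"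
      by (simp add: sum_divide_distrib)
    finally show ?thesis by simp
  qed
  have "(\<Sum>x\<in>RC t. m t (\<Phi> x) x) \<le> (\<Sum>x\<in>RC t. (\<Sum>i\<in>A. (m t i x)^2 / m t 1 x) / (2 * L) + L * m t 1 x / 2)"
    by (rule sum_mono) (rule pt)
  also have "\<dots> = (\<Sum>i\<in>A. 1 + chi2 (RC t) (m t i) (m t 1)) / (2 * L) + L * (\<Sum>x\<in>RC t. m t 1 x) / 2"
  proof -
    have "(\<Sum>x\<in>RC t. (\<Sum>i\<in>A. (m t i x)^2 / m t 1 x) / (2 * L) + L * m t 1 x / 2)
        = (\<Sum>x\<in>RC t. \<Sum>i\<in>A. (m t i x)^2 / m t 1 x) / (2 * L) + L * (\<Sum>x\<in>RC t. m t 1 x) / 2"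
      by (simp add: sum.distrib sum_divide_distrib sum_distrib_left)
    also have "(\<Sum>x\<in>RC t. \<Sum>i\<in>A. (m t i x)^2 / m t 1 x) = (\<Sum>i\<in>A. 1 + chi2 (RC t) (m t i) (m t 1))"
      by (subst sum.swap) (simp add: chi2_def)
    finally show ?thesis .
  qed
  also have "\<dots> \<le> (real k * (1 + Bv)) / (2 * L) + L / 2"
  proof -
    have "(\<Sum>i\<in>A. 1 + chi2 (RC t) (m t i) (m t 1)) \<le> (\<Sum>i\<in>A. 1 + Bv)"
      using chiB one by (intro sum_mono) auto
    hence "(\<Sum>i\<in>A. 1 + chi2 (RC t) (m t i) (m t 1)) / (2 * L) \<le> (real k * (1 + Bv)) / (2 * L)"
      using L0 by (intro divide_right_mono) auto
    thus ?thesis using mu_sum[OF one] by simp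
  qed
  also have "\<dots> \<le> L"
  proof -
    have "real k * (1 + Bv) \<le> L^2"
    proof -
      have "L^2 - real k * (1 + Bv) = (real k - 1 - Bv)^2 / 4"
        by (simp add: L_def power2_eq_square field_simps)
      thus ?thesis by (smt (verit) zero_le_power2 divide_nonneg_pos)
    qed
    thus ?thesis using L0 by (simp add: field_simps power2_eq_square)
  qed
  finally show ?thesis by (simp add: L_def)
qed

lemma err_bound:
  assumes B0: "0 \<le> Bv" and chiB: "\<And>i j. i \<in> A \<Longrightarrow> j \<in> A \<Longrightarrow> chi2 (RC t) (m t i) (m t j) \<le> Bv"
    and Phi: "\<forall>x \<in> RC t. \<Phi> x \<in> A"
  shows "Max ((\<lambda>i. err_prob k \<theta> r d t \<Phi> i) ` A) \<ge> 1/2 - 1 / (2 * real k) - Bv / (2 * real k)"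
proof -
  let ?M = "Max ((\<lambda>i. err_prob k \<theta> r d t \<Phi> i) ` A)"
  have err: "err_prob k \<theta> r d t \<Phi> i = 1 - (\<Sum>x\<in>RC t. if \<Phi> x = i then m t i x else 0)" if i: "i \<in> A" for i
  proof -
    have "(\<Sum>x\<in>RC t. if \<Phi> x \<noteq> i then m t i x else 0) = (\<Sum>x\<in>RC t. m t i x - (if \<Phi> x = i then m t i x else 0))"
      by (intro sum.cong refl) auto
    thus ?thesis using mu_sum[OF i] by (simp add: err_prob_def sum_subtractf)
  qed
  have "(\<Sum>i\<in>A. err_prob k \<theta> r d t \<Phi> i) = real k - (\<Sum>i\<in>A. \<Sum>x\<in>RC t. if \<Phi> x = i then m t i x else 0)"
    by (simp add: err sum_subtractf)
  also have "(\<Sum>i\<in>A. \<Sum>x\<in>RC t. if \<Phi> x = i then m t i x else 0) = (\<Sum>x\<in>RC t. m t (\<Phi> x) x)"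
    by (subst sum.swap) (intro sum.cong refl, use Phi in \<open>simp add: sum.delta'\<close>)
  finally have S: "(\<Sum>i\<in>A. err_prob k \<theta> r d t \<Phi> i) = real k - (\<Sum>x\<in>RC t. m t (\<Phi> x) x)" .
  have "(\<Sum>i\<in>A. err_prob k \<theta> r d t \<Phi> i) \<le> of_nat (card A) * ?M"
    by (rule sum_bounded_above) (rule Max_ge, auto)
  hence "(\<Sum>i\<in>A. err_prob k \<theta> r d t \<Phi> i) \<le> real k * ?M" by simp
  hence "real k - (real k + 1 + Bv) / 2 \<le> real k * ?M"
    using S sum_phi_bound[OF B0 chiB Phi] by linarith
  hence h: "real k - 1 - Bv \<le> (2 * real k) * ?M" by (simp add: field_simps)
  have kp: "0 < 2 * real k" using kpos by simp
  have "(real k - 1 - Bv) / (2 * real k) \<le> ?M"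
    using h kp by (simp add: pos_divide_le_eq mult.commute)
  moreover have "1/2 - 1 / (2 * real k) - Bv / (2 * real k) = (real k - 1 - Bv) / (2 * real k)"
    using kpos by (simp add: field_simps)
  ultimately show ?thesis by simp
qed

end


theorem theorem6:
  fixes k d r t :: nat and \<theta> \<delta> :: real
  assumes k: "0 < k"
    and th: "0 < \<theta>" "\<theta> < 1"
    and d: "0 < d"
    and delta: "0 \<le> \<delta>" "\<delta> \<le> 1" "real r = \<delta> * real d"
    and h1: "\<delta> * real d > 1"
    and h2: "(1 - \<delta>) * \<theta>^2 * real d < 1/4"
    and h3: "2 * \<delta> * real d * ln (1 + \<theta>^2 * (1 / (\<theta> + (1 - \<theta>) / real k) + 1 / ((1 - \<theta>) / real k)))
               < (1 - 4 * (1 - \<delta>) * \<theta>^2 * real d)^2"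
    and t: "0 < t"
  shows "Max ((\<lambda>(i, j). ln (1 + chi2 (rev_configs k r d t) (mu k \<theta> r d t i) (mu k \<theta> r d t j)))
                 ` ({1..k} \<times> {1..k}))
           \<le> 2 * \<delta> * real d * ln (1 + \<theta>^2 * (1 / (\<theta> + (1 - \<theta>) / real k) + 1 / ((1 - \<theta>) / real k)))
               / (1 - 4 * (1 - \<delta>) * \<theta>^2 * real d)
       \<and> 2 * \<delta> * real d * ln (1 + \<theta>^2 * (1 / (\<theta> + (1 - \<theta>) / real k) + 1 / ((1 - \<theta>) / real k)))
               / (1 - 4 * (1 - \<delta>) * \<theta>^2 * real d)
           \<le> real k * (2 * \<delta> * \<theta>^2 * real d / (1 - 4 * (1 - \<delta>) * \<theta>^2 * real d))
               * (1 / (1 - \<theta>) + 1 / (real k * \<theta> + 1 - \<theta>))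
       \<and> (\<forall>\<Phi>. (\<forall>x \<in> rev_configs k r d t. \<Phi> x \<in> {1..k}) \<longrightarrow>
             Max ((\<lambda>i. err_prob k \<theta> r d t \<Phi> i) ` {1..k})
               \<ge> 1/2 * (1 - 2 * \<delta> * \<theta>^2 * real d / (1 - 4 * (1 - \<delta>) * \<theta>^2 * real d)
                          * (1 / (1 - \<theta>) + 1 / (real k * \<theta> + 1 - \<theta>)) - 1 / real k))"
proof -
  interpret TS k \<theta> r d by unfold_locales (use k th in auto)
  define D where "D = 1 - 4 * (1 - \<delta>) * \<theta>^2 * real d"
  define Xv where "Xv = \<theta>^2 * (1 / (\<theta> + (1 - \<theta>) / real k) + 1 / ((1 - \<theta>) / real k))"
  define Bv where "Bv = 2 * \<delta> * real d * ln (1 + Xv) / D"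
  have XX: "X = Xv" by (simp add: X_def Xv_def)
  have X0: "0 \<le> Xv" using X_nonneg XX by simp
  have D0: "0 < D" using h2 unfolding D_def by (simp add: algebra_simps)
  have rd: "r \<le> d"
  proof -
    have "real r \<le> real d" using delta d by (simp add: mult_le_cancel_right1)
    thus ?thesis by simp
  qed
  have ln0: "0 \<le> ln (1 + Xv)" using X0 by simp
  have B0: "0 \<le> Bv" unfolding Bv_def using delta ln0 D0 by (intro divide_nonneg_pos mult_nonneg_nonneg) auto
  have BD: "Bv \<le> D"
  proof -
    have "2 * \<delta> * real d * ln (1 + Xv) < D^2" using h3 by (simp add: D_def Xv_def)
    hence "Bv < D" unfolding Bv_def using D0 by (simp add: divide_less_eq power2_eq_square)
    thus ?thesis by simp
  qed
  have hr: "real r * ln (1 + X) = D * Bv / 2"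
    using D0 delta(3) by (simp add: Bv_def XX)
  have hn: "real (d - r) * (4 * \<theta>^2) = 1 - D"
    using rd delta(3) by (simp add: D_def of_nat_diff algebra_simps)
  have chiB: "\<And>i j. i \<in> A \<Longrightarrow> j \<in> A \<Longrightarrow> chi2 (RC t) (m t i) (m t j) \<le> Bv"
    by (rule chi2_bound[OF rd B0 BD hr hn])
  have part1: "Max ((\<lambda>(i, j). ln (1 + chi2 (rev_configs k r d t) (mu k \<theta> r d t i) (mu k \<theta> r d t j))) ` (A \<times> A)) \<le> Bv"
  proof (rule Max.boundedI)
    show "finite ((\<lambda>(i, j). ln (1 + chi2 (rev_configs k r d t) (mu k \<theta> r d t i) (mu k \<theta> r d t j))) ` (A \<times> A))" by simp
    show "(\<lambda>(i, j). ln (1 + chi2 (rev_configs k r d t) (mu k \<theta> r d t i) (mu k \<theta> r d t j))) ` (A \<times> A) \<noteq> {}" using k by auto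
  next
    fix y assume "y \<in> (\<lambda>(i, j). ln (1 + chi2 (rev_configs k r d t) (mu k \<theta> r d t i) (mu k \<theta> r d t j))) ` (A \<times> A)"
    then obtain i j where ij: "i \<in> A" "j \<in> A" and y: "y = ln (1 + chi2 (RC t) (m t i) (m t j))" by auto
    have "y \<le> (1 + chi2 (RC t) (m t i) (m t j)) - 1"
      unfolding y by (rule ln_le_minus_one[OF one_plus_chi2_pos[OF ij]])
    thus "y \<le> Bv" using chiB[OF ij] by simp
  qed
  define A' where "A' = 2 * \<delta> * \<theta>^2 * real d / D * (1 / (1 - \<theta>) + 1 / (real k * \<theta> + 1 - \<theta>))"
  have kth: "real k * \<theta> + 1 - \<theta> > 0" using th k by (smt (verit) mult_pos_pos of_nat_0_less_iff)
  have XvA: "2 * \<delta> * real d * Xv / D = real k * A'"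
  proof -
    have a: "1 / (\<theta> + (1 - \<theta>) / real k) = real k / (real k * \<theta> + 1 - \<theta>)"
      using k kth by (simp add: field_simps)
    have b: "1 / ((1 - \<theta>) / real k) = real k / (1 - \<theta>)" by simp
    show ?thesis unfolding Xv_def A'_def a b using D0 th by (simp add: field_simps)
  qed
  have part2: "Bv \<le> real k * A'"
  proof -
    have "ln (1 + Xv) \<le> Xv" using X0 by (rule ln_add_one_self_le_self)
    hence "2 * \<delta> * real d * ln (1 + Xv) \<le> 2 * \<delta> * real d * Xv"
      using delta d by (intro mult_left_mono) auto
    hence "Bv \<le> 2 * \<delta> * real d * Xv / D" unfolding Bv_def using D0 by (simp add: divide_right_mono)
    thus ?thesis using XvA by simp
  qed
  have part3: "\<forall>\<Phi>. (\<forall>x \<in> rev_configs k r d t. \<Phi> x \<in> {1..k}) \<longrightarrow>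
             Max ((\<lambda>i. err_prob k \<theta> r d t \<Phi> i) ` {1..k}) \<ge> 1/2 * (1 - A' - 1 / real k)"
  proof (intro allI impI)
    fix \<Phi> :: "(nat list \<Rightarrow> nat) \<Rightarrow> nat" assume Phi: "\<forall>x \<in> rev_configs k r d t. \<Phi> x \<in> {1..k}"
    have "Max ((\<lambda>i. err_prob k \<theta> r d t \<Phi> i) ` A) \<ge> 1/2 - 1 / (2 * real k) - Bv / (2 * real k)"
      by (rule err_bound[OF B0 chiB Phi])
    moreover have "Bv / (2 * real k) \<le> A' / 2"
      using part2 k by (simp add: field_simps)
    ultimately show "Max ((\<lambda>i. err_prob k \<theta> r d t \<Phi> i) ` {1..k}) \<ge> 1/2 * (1 - A' - 1 / real k)"
      by (simp add: field_simps)
  qed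
  show ?thesis
    using part1 part2 part3 unfolding Bv_def Xv_def A'_def D_def
    by (simp add: mult.assoc)
qed


end
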